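(* For $\alpha_2\in\mathbb{C}$ consider the system $$\frac{dx}{dt}=y,\quad \frac{dy}{dt}=z,\quad \frac{dz}{dt}=-6y^2+w+\frac t4,\quad \frac{dw}{dt}=wq+\frac{2\alpha_2-1}{4},\quad \frac{dq}{dt}=-\frac12q^2-4y .$$ Write $( * )=(x,y,z,w,q,t;\alpha_2)$ and $D:=t+2w+2yq^2-8y^2-4zq$. Define $$s_0:( * )\mapsto\left(x,y,z,w,q+\frac{\alpha_2-\frac12}{w},t;1-\alpha_2\right),$$ $$s_1:( * )\mapsto\Big(x+\frac{2\alpha_2+1}{2D},\ y+\frac{(2\alpha_2+1)q}{2D}-\frac{(2\alpha_2+1)^2}{4D^2},\ z+\frac{(2\alpha_2+1)(q^2-8y)}{4D}-\frac{3(2\alpha_2+1)^2q}{4D^2}+\frac{(2\alpha_2+1)^3}{4D^3},$$ $$w+\frac{2(2\alpha_2+1)(yq-z)}{D}+\frac{(2\alpha_2+1)^2(q^2+4y)}{4D^2},\ q-\frac{2\alpha_2+1}{D},\ t;\ -1-\alpha_2\Big),$$ $$\pi:( * )\mapsto\left(x+\frac q2,\ -\left(y+\frac{q^2}{4}\right),\ -\left(z-\frac14q(q^2+8y)\right),\ -\left(w+yq^2-4y^2-2zq+\frac t2\right),\ -q,\ t;\ -\alpha_2\right).$$ Then $s_0,s_1,\pi$ are Bäcklund transformations of this system (each maps solutions with parameter $\alpha_2$ to solutions with the transformed parameter), and they generate a group of Bäcklund transformations realizing the extended affine Weyl group of type $A_1^{(1)}$.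
   Context: The extended affine Weyl group of type $A_1^{(1)}$ is the group generated by $s_0,s_1,\pi$ with the relations $s_0^2=s_1^2=\pi^2=1$ and $\pi s_0=s_1\pi$. A transformation is applied to a rational function $g$ of $(x,y,z,w,q,t,\alpha_2)$ by substituting the images of the variables and the parameter into $g$. *)

theory Defs
  imports "HOL-Analysis.Analysis"
begin

type_synonym st = "complex \<times> complex \<times> complex \<times> complex \<times> complex \<times> complex \<times> complex"

definition st_x :: "st \<Rightarrow> complex" where "st_x = (\<lambda>(x,y,z,w,q,t,a). x)"
definition st_y :: "st \<Rightarrow> complex" where "st_y = (\<lambda>(x,y,z,w,q,t,a). y)"
definition st_z :: "st \<Rightarrow> complex" where "st_z = (\<lambda>(x,y,z,w,q,t,a). z)"
definition st_w :: "st \<Rightarrow> complex" where "st_w = (\<lambda>(x,y,z,w,q,t,a). w)"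
definition st_q :: "st \<Rightarrow> complex" where "st_q = (\<lambda>(x,y,z,w,q,t,a). q)"
definition st_t :: "st \<Rightarrow> complex" where "st_t = (\<lambda>(x,y,z,w,q,t,a). t)"
definition st_a :: "st \<Rightarrow> complex" where "st_a = (\<lambda>(x,y,z,w,q,t,a). a)"

definition is_solution ::
  "complex set \<Rightarrow> complex \<Rightarrow> (complex \<Rightarrow> complex) \<Rightarrow> (complex \<Rightarrow> complex) \<Rightarrow>
   (complex \<Rightarrow> complex) \<Rightarrow> (complex \<Rightarrow> complex) \<Rightarrow> (complex \<Rightarrow> complex) \<Rightarrow> bool" where
  "is_solution U a x y z w q \<longleftrightarrow> open U \<and>
     (\<forall>t\<in>U. (x has_field_derivative y t) (at t) \<and>
            (y has_field_derivative z t) (at t) \<and>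
            (z has_field_derivative (-6 * (y t)^2 + w t + t / 4)) (at t) \<and>
            (w has_field_derivative (w t * q t + (2 * a - 1) / 4)) (at t) \<and>
            (q has_field_derivative (-(1/2) * (q t)^2 - 4 * y t)) (at t))"

definition Dfun :: "st \<Rightarrow> complex" where
  "Dfun = (\<lambda>(x,y,z,w,q,t,a). t + 2*w + 2*y*q^2 - 8*y^2 - 4*z*q)"

definition s0 :: "st \<Rightarrow> st" where
  "s0 = (\<lambda>(x,y,z,w,q,t,a). (x, y, z, w, q + (a - 1/2) / w, t, 1 - a))"

definition s1 :: "st \<Rightarrow> st" where
  "s1 = (\<lambda>P. case P of (x,y,z,w,q,t,a) \<Rightarrow>
     (let D = Dfun P; b = 2*a + 1 in
      (x + b / (2*D),
       y + b*q / (2*D) - b^2 / (4*D^2),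
       z + b*(q^2 - 8*y) / (4*D) - 3*b^2*q / (4*D^2) + b^3 / (4*D^3),
       w + 2*b*(y*q - z) / D + b^2*(q^2 + 4*y) / (4*D^2),
       q - b / D,
       t,
       -1 - a)))"

definition pi_tr :: "st \<Rightarrow> st" where
  "pi_tr = (\<lambda>(x,y,z,w,q,t,a).
     (x + q/2,
      -(y + q^2/4),
      -(z - (1/4)*q*(q^2 + 8*y)),
      -(w + y*q^2 - 4*y^2 - 2*z*q + t/2),
      -q,
      t,
      -a))"

definition backlund :: "(st \<Rightarrow> st) \<Rightarrow> (st \<Rightarrow> bool) \<Rightarrow> bool" where
  "backlund T ok \<longleftrightarrow>
     (\<forall>U a x y z w q. is_solution U a x y z w q \<and>
        (\<forall>t\<in>U. ok (x t, y t, z t, w t, q t, t, a)) \<longrightarrow>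
        (let X' = (\<lambda>t. T (x t, y t, z t, w t, q t, t, a)) in
          (\<forall>t\<in>U. st_t (X' t) = t) \<and>
          (\<forall>t0\<in>U. is_solution U (st_a (X' t0))
              (\<lambda>t. st_x (X' t)) (\<lambda>t. st_y (X' t)) (\<lambda>t. st_z (X' t))
              (\<lambda>t. st_w (X' t)) (\<lambda>t. st_q (X' t)))))"

end

theory Submission
  imports Defs
begin


definition Dl :: "complex \<Rightarrow> complex \<Rightarrow> complex \<Rightarrow> complex \<Rightarrow> complex \<Rightarrow> complex" where
  "Dl y z w q t = t + 2*w + 2*y*q^2 - 8*y^2 - 4*z*q"

lemma Dfun_eq: "Dfun (x,y,z,w,q,t,a) = Dl y z w q t"
  by (simp add: Dfun_def Dl_def)

lemma s1_eq: "s1 (x,y,z,w,q,t,a) = (let vv = (2*a+1)/2 * inverse (Dl y z w q t) in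
   (x + vv, y + q* vv - vv^2, z + (q^2-8*y)* vv/2 - 3*q* vv^2 + 2* vv^3,
    w + 4*(y*q-z)* vv + (q^2+4*y)* vv^2, q - 2* vv, t, -1-a))"
proof -
  define D where "D = Dl y z w q t"
  define b where "b = 2*a+1"
  have "s1 (x,y,z,w,q,t,a) = (x + b/(2*D), y + b*q/(2*D) - b^2/(4*D^2),
     z + b*(q^2 - 8*y)/(4*D) - 3*b^2*q/(4*D^2) + b^3/(4*D^3),
     w + 2*b*(y*q - z)/D + b^2*(q^2 + 4*y)/(4*D^2), q - b/D, t, -1-a)"
    by (simp add: s1_def Dfun_eq D_def b_def Let_def)
  also have "\<dots> = (let vv = b/2 * inverse D in
   (x + vv, y + q* vv - vv^2, z + (q^2-8*y)* vv/2 - 3*q* vv^2 + 2* vv^3,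
    w + 4*(y*q-z)* vv + (q^2+4*y)* vv^2, q - 2* vv, t, -1-a))"
  proof (cases "D = 0")
    case True thus ?thesis by (simp add: Let_def)
  next
    case False thus ?thesis by (simp add: Let_def field_simps power2_eq_square power3_eq_cube)
  qed
  finally show ?thesis by (simp add: D_def b_def)
qed

lemma D_s1_alg:
  fixes y z w q t vv :: complex
  shows "Dl (y + q* vv - vv^2) (z + (q^2-8*y)* vv/2 - 3*q* vv^2 + 2* vv^3)
    (w + 4*(y*q-z)* vv + (q^2+4*y)* vv^2) (q - 2* vv) t = Dl y z w q t"
  unfolding Dl_def by algebra

lemma D_s1: "Dfun (s1 P) = Dfun P"
proof -
  obtain x y z w q t a where P: "P = (x,y,z,w,q,t,a)" by (cases P) auto
  show ?thesis unfolding P s1_eq Let_def Dfun_eq by (rule D_s1_alg)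
qed

lemma s1s1_alg:
  fixes x y z w q t a vv :: complex
  shows "x + vv + - vv = x"
  "y + q * vv - vv^2 + (q - 2 * vv) * - vv - (- vv)^2 = y"
  "z + (q^2 - 8 * y) * vv / 2 - 3 * q * vv^2 + 2 * vv ^ 3 +
     ((q - 2 * vv)^2 - 8 * (y + q * vv - vv^2)) * - vv / 2 -
     3 * (q - 2 * vv) * (- vv)^2 + 2 * (- vv) ^ 3 = z"
  "w + 4 * (y * q - z) * vv + (q^2 + 4 * y) * vv^2 +
     4 * ((y + q * vv - vv^2) * (q - 2 * vv) -
      (z + (q^2 - 8 * y) * vv / 2 - 3 * q * vv^2 + 2 * vv ^ 3)) * - vv +
     ((q - 2 * vv)^2 + 4 * (y + q * vv - vv^2)) * (- vv)^2 = w"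
  "q - 2 * vv - 2 * - vv = q"
  "- 1 - (- 1 - a) = a"
  by (simp_all add: field_simps power2_eq_square power3_eq_cube)

lemma s1_s1: "s1 (s1 P) = P"
proof -
  obtain x y z w q t a where P: "P = (x,y,z,w,q,t,a)" by (cases P) auto
  define vv where "vv = (2*a+1)/2 * inverse (Dl y z w q t)"
  have S: "s1 P = (x + vv, y + q* vv - vv^2, z + (q^2-8*y)* vv/2 - 3*q* vv^2 + 2* vv^3,
    w + 4*(y*q-z)* vv + (q^2+4*y)* vv^2, q - 2* vv, t, -1-a)"
    by (simp add: P s1_eq vv_def Let_def)
  have vv2: "(2*(-1-a)+1)/2 * inverse (Dl (y + q* vv - vv^2) (z + (q^2-8*y)* vv/2 - 3*q* vv^2 + 2* vv^3)
    (w + 4*(y*q-z)* vv + (q^2+4*y)* vv^2) (q - 2* vv) t) = -vv"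
    unfolding D_s1_alg vv_def
  proof -
    have "2*(-1-a)+1 = -(2*a+1)" by simp
    thus "(2*(-1-a)+1)/2 * inverse (Dl y z w q t) = - ((2*a+1)/2 * inverse (Dl y z w q t))" by (simp only: minus_divide_left[symmetric] mult_minus_left)
  qed
  have "s1 (s1 P) = s1 (x + vv, y + q * vv - vv^2, z + (q^2-8*y)* vv/2 - 3*q* vv^2 + 2* vv^3,
    w + 4*(y*q-z)* vv + (q^2+4*y)* vv^2, q - 2* vv, t, -1-a)" using S by simp
  also have "\<dots> = P" unfolding s1_eq Let_def vv2 P prod.inject
    by (intro conjI refl s1s1_alg)
  finally show ?thesis .
qed

lemma s0_s0: "st_w P \<noteq> 0 \<Longrightarrow> s0 (s0 P) = P"
proof -
  assume h: "st_w P \<noteq> 0"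
  obtain x y z w q t a where P: "P = (x,y,z,w,q,t,a)" by (cases P) auto
  have "w \<noteq> 0" using h by (simp add: P st_w_def)
  then show ?thesis by (simp add: P s0_def field_simps)
qed

lemma pi_pi: "pi_tr (pi_tr P) = P"
proof -
  obtain x y z w q t a where P: "P = (x,y,z,w,q,t,a)" by (cases P) auto
  show ?thesis by (simp add: P pi_tr_def field_simps power2_eq_square power3_eq_cube)
qed

lemma s0pi_alg:
  fixes x y z w q t a vv :: complex
  shows "x + q/2 = x + vv + (q - 2* vv)/2"
  "-(y + q^2/4) = -((y + q * vv - vv^2) + (q - 2* vv)^2/4)"
  "-(z - (1/4)*q*(q^2 + 8*y)) = -((z + (q^2-8*y)* vv/2 - 3*q* vv^2 + 2* vv^3)
      - (1/4)*(q - 2* vv)*((q - 2* vv)^2 + 8*(y + q * vv - vv^2)))"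
  "-(w + y*q^2 - 4*y^2 - 2*z*q + t/2) = -((w + 4*(y*q-z)* vv + (q^2+4*y)* vv^2)
     + (y + q * vv - vv^2)*(q - 2* vv)^2 - 4*(y + q * vv - vv^2)^2
     - 2*(z + (q^2-8*y)* vv/2 - 3*q* vv^2 + 2* vv^3)*(q - 2* vv) + t/2)"
  by (simp_all add: field_simps power2_eq_square power3_eq_cube)

lemma Qalg: fixes q a D :: complex
  shows "-q + (-a - 1/2) / (-(D/2)) = -(q - 2*((2*a+1)/2 * inverse D))"
proof (cases "D = 0")
  case True thus ?thesis by simp
next
  case False thus ?thesis by (simp add: field_simps)
qed

lemma s0_pi: "s0 (pi_tr P) = pi_tr (s1 P)"
proof -
  obtain x y z w q t a where P: "P = (x,y,z,w,q,t,a)" by (cases P) auto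
  define vv where "vv = (2*a+1)/2 * inverse (Dl y z w q t)"
  have S: "s1 P = (x + vv, y + q * vv - vv^2, z + (q^2-8*y)* vv/2 - 3*q* vv^2 + 2* vv^3,
    w + 4*(y*q-z)* vv + (q^2+4*y)* vv^2, q - 2* vv, t, -1-a)"
    by (simp add: P s1_eq vv_def Let_def)
  have W0: "w + y*q^2 - 4*y^2 - 2*z*q + t/2 = Dl y z w q t / 2"
    by (simp add: Dl_def field_simps)
  have Q: "-q + (-a - 1/2) / (-(w + y*q^2 - 4*y^2 - 2*z*q + t/2)) = -(q - 2* vv)"
    unfolding W0 vv_def by (rule Qalg)
  have L: "s0 (pi_tr P) = (x + q/2, -(y + q^2/4), -(z - (1/4)*q*(q^2 + 8*y)),
     -(w + y*q^2 - 4*y^2 - 2*z*q + t/2), -q + (-a - 1/2) / (-(w + y*q^2 - 4*y^2 - 2*z*q + t/2)),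
     t, 1 - - a)"
    unfolding P pi_tr_def s0_def by simp
  have R: "pi_tr (s1 P) = (x + vv + (q - 2* vv)/2, -((y + q * vv - vv^2) + (q - 2* vv)^2/4),
     -((z + (q^2-8*y)* vv/2 - 3*q* vv^2 + 2* vv^3)
      - (1/4)*(q - 2* vv)*((q - 2* vv)^2 + 8*(y + q * vv - vv^2))),
     -((w + 4*(y*q-z)* vv + (q^2+4*y)* vv^2)
     + (y + q * vv - vv^2)*(q - 2* vv)^2 - 4*(y + q * vv - vv^2)^2
     - 2*(z + (q^2-8*y)* vv/2 - 3*q* vv^2 + 2* vv^3)*(q - 2* vv) + t/2), -(q - 2* vv), t, -(-1-a))"
    unfolding S pi_tr_def by (simp only: prod.case)
  show ?thesis unfolding L R prod.inject
    by (intro conjI; (simp only: Q)?; simp add: field_simps power2_eq_square power3_eq_cube)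
qed


lemma s1_der:
  fixes x y z w q v :: "complex \<Rightarrow> complex" and a t :: complex
  assumes hx: "(x has_field_derivative y t) (at t)"
  and hy: "(y has_field_derivative z t) (at t)"
  and hz: "(z has_field_derivative (-6 * (y t)^2 + w t + t / 4)) (at t)"
  and hw: "(w has_field_derivative (w t * q t + (2 * a - 1) / 4)) (at t)"
  and hq: "(q has_field_derivative (-(1/2) * (q t)^2 - 4 * y t)) (at t)"
  and hv: "(v has_field_derivative (q t * v t - (v t)^2)) (at t)"
  and dt: "v t * Dl (y t) (z t) (w t) (q t) t = (2*a+1)/2"
  shows "((\<lambda>t. x t + v t) has_field_derivative (y t + q t * v t - (v t)^2)) (at t)"
  and "((\<lambda>t. y t + q t * v t - (v t)^2) has_field_derivative
          (z t + ((q t)^2-8*y t) * v t/2 - 3*q t * (v t)^2 + 2 * (v t)^3)) (at t)"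
  and "((\<lambda>t. z t + ((q t)^2-8*y t) * v t/2 - 3*q t * (v t)^2 + 2 * (v t)^3) has_field_derivative
          (-6 * (y t + q t * v t - (v t)^2)^2 + (w t + 4*(y t*q t-z t) * v t + ((q t)^2+4*y t) * (v t)^2) + t / 4)) (at t)"
  and "((\<lambda>t. w t + 4*(y t*q t-z t) * v t + ((q t)^2+4*y t) * (v t)^2) has_field_derivative
          ((w t + 4*(y t*q t-z t) * v t + ((q t)^2+4*y t) * (v t)^2) * (q t - 2 * v t) + (2 * (-1-a) - 1) / 4)) (at t)"
  and "((\<lambda>t. q t - 2 * v t) has_field_derivative (-(1/2) * (q t - 2 * v t)^2 - 4 * (y t + q t * v t - (v t)^2))) (at t)"
proof -
  show "((\<lambda>t. x t + v t) has_field_derivative (y t + q t * v t - (v t)^2)) (at t)"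
    by (rule derivative_eq_intros hx hy hz hw hq hv refl)+ (simp add: field_simps power2_eq_square power3_eq_cube)
  show "((\<lambda>t. y t + q t * v t - (v t)^2) has_field_derivative
          (z t + ((q t)^2-8*y t) * v t/2 - 3*q t * (v t)^2 + 2 * (v t)^3)) (at t)"
    by (rule derivative_eq_intros hx hy hz hw hq hv refl)+ (simp add: field_simps power2_eq_square power3_eq_cube)
  show "((\<lambda>t. z t + ((q t)^2-8*y t) * v t/2 - 3*q t * (v t)^2 + 2 * (v t)^3) has_field_derivative
          (-6 * (y t + q t * v t - (v t)^2)^2 + (w t + 4*(y t*q t-z t) * v t + ((q t)^2+4*y t) * (v t)^2) + t / 4)) (at t)"
    by (rule derivative_eq_intros hx hy hz hw hq hv refl | simp only: zero_neq_numeral[symmetric] not_False_eq_True)+ (simp add: field_simps power2_eq_square power3_eq_cube)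
  show "((\<lambda>t. q t - 2 * v t) has_field_derivative (-(1/2) * (q t - 2 * v t)^2 - 4 * (y t + q t * v t - (v t)^2))) (at t)"
    by (rule derivative_eq_intros hx hy hz hw hq hv refl)+ (simp add: field_simps power2_eq_square power3_eq_cube)
  have "((\<lambda>t. w t + 4*(y t*q t-z t) * v t + ((q t)^2+4*y t) * (v t)^2) has_field_derivative
          ((w t + 4*(y t*q t-z t) * v t + ((q t)^2+4*y t) * (v t)^2) * (q t - 2 * v t) + (2 * (-1-a) - 1) / 4
           + ((2*a+1)/2 - v t * Dl (y t) (z t) (w t) (q t) t))) (at t)"
    unfolding Dl_def
    by (rule derivative_eq_intros hx hy hz hw hq hv refl)+ (simp add: field_simps power2_eq_square power3_eq_cube)
  then show "((\<lambda>t. w t + 4*(y t*q t-z t) * v t + ((q t)^2+4*y t) * (v t)^2) has_field_derivative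
          ((w t + 4*(y t*q t-z t) * v t + ((q t)^2+4*y t) * (v t)^2) * (q t - 2 * v t) + (2 * (-1-a) - 1) / 4)) (at t)"
    using dt by simp
qed

lemma v_der:
  fixes x y z w q :: "complex \<Rightarrow> complex" and a t :: complex
  assumes hx: "(x has_field_derivative y t) (at t)"
  and hy: "(y has_field_derivative z t) (at t)"
  and hz: "(z has_field_derivative (-6 * (y t)^2 + w t + t / 4)) (at t)"
  and hw: "(w has_field_derivative (w t * q t + (2 * a - 1) / 4)) (at t)"
  and hq: "(q has_field_derivative (-(1/2) * (q t)^2 - 4 * y t)) (at t)"
  and d0: "Dl (y t) (z t) (w t) (q t) t \<noteq> 0"
  shows "((\<lambda>t. (2*a+1)/2 * inverse (Dl (y t) (z t) (w t) (q t) t)) has_field_derivative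
     (q t * ((2*a+1)/2 * inverse (Dl (y t) (z t) (w t) (q t) t)) - ((2*a+1)/2 * inverse (Dl (y t) (z t) (w t) (q t) t))^2)) (at t)"
proof -
  have hD: "((\<lambda>t. Dl (y t) (z t) (w t) (q t) t) has_field_derivative ((2*a+1)/2 - q t * Dl (y t) (z t) (w t) (q t) t)) (at t)"
    unfolding Dl_def
    by (rule derivative_eq_intros hx hy hz hw hq refl)+ (simp add: field_simps power2_eq_square power3_eq_cube)
  have "((\<lambda>t. (2*a+1)/2 * inverse (Dl (y t) (z t) (w t) (q t) t)) has_field_derivative
     (2*a+1)/2 * (- (((2*a+1)/2 - q t * Dl (y t) (z t) (w t) (q t) t) * inverse ((Dl (y t) (z t) (w t) (q t) t) ^ Suc (Suc 0))))) (at t)"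
    by (rule DERIV_cmult[OF DERIV_inverse_fun[OF hD d0]])
  then show ?thesis
    by (rule DERIV_cong) (use d0 in \<open>simp add: field_simps power2_eq_square\<close>)
qed

lemma pi_der:
  fixes x y z w q :: "complex \<Rightarrow> complex" and a t :: complex
  assumes hx: "(x has_field_derivative y t) (at t)"
  and hy: "(y has_field_derivative z t) (at t)"
  and hz: "(z has_field_derivative (-6 * (y t)^2 + w t + t / 4)) (at t)"
  and hw: "(w has_field_derivative (w t * q t + (2 * a - 1) / 4)) (at t)"
  and hq: "(q has_field_derivative (-(1/2) * (q t)^2 - 4 * y t)) (at t)"
  shows "((\<lambda>t. x t + q t/2) has_field_derivative (-(y t + (q t)^2/4))) (at t)"
  and "((\<lambda>t. -(y t + (q t)^2/4)) has_field_derivative (-(z t - (1/4)*q t*((q t)^2 + 8*y t)))) (at t)"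
  and "((\<lambda>t. -(z t - (1/4)*q t*((q t)^2 + 8*y t))) has_field_derivative
        (-6 * (-(y t + (q t)^2/4))^2 + (-(w t + y t*(q t)^2 - 4*(y t)^2 - 2*z t*q t + t/2)) + t / 4)) (at t)"
  and "((\<lambda>t. -(w t + y t*(q t)^2 - 4*(y t)^2 - 2*z t*q t + t/2)) has_field_derivative
        ((-(w t + y t*(q t)^2 - 4*(y t)^2 - 2*z t*q t + t/2)) * (- q t) + (2 * (-a) - 1) / 4)) (at t)"
  and "((\<lambda>t. - q t) has_field_derivative (-(1/2) * (- q t)^2 - 4 * (-(y t + (q t)^2/4)))) (at t)"
  by ((rule derivative_eq_intros hx hy hz hw hq refl)+, simp add: field_simps power2_eq_square power3_eq_cube)+

lemma s0_der:
  fixes x y z w q :: "complex \<Rightarrow> complex" and a t :: complex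
  assumes hw: "(w has_field_derivative (w t * q t + (2 * a - 1) / 4)) (at t)"
  and hq: "(q has_field_derivative (-(1/2) * (q t)^2 - 4 * y t)) (at t)"
  and w0: "w t \<noteq> 0"
  shows "(w has_field_derivative (w t * (q t + (a - 1/2) / w t) + (2 * (1-a) - 1) / 4)) (at t)"
  and "((\<lambda>t. q t + (a - 1/2) / w t) has_field_derivative (-(1/2) * (q t + (a - 1/2) / w t)^2 - 4 * y t)) (at t)"
proof -
  show "(w has_field_derivative (w t * (q t + (a - 1/2) / w t) + (2 * (1-a) - 1) / 4)) (at t)"
    by (rule DERIV_cong[OF hw]) (use w0 in \<open>simp add: field_simps\<close>)
  show "((\<lambda>t. q t + (a - 1/2) / w t) has_field_derivative (-(1/2) * (q t + (a - 1/2) / w t)^2 - 4 * y t)) (at t)"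
    by (rule derivative_eq_intros hw hq refl w0)+ (use w0 in \<open>simp add: field_simps power2_eq_square\<close>)
qed


lemma backlund_intro:
  assumes tt: "\<And>x y z w q t a. st_t (T (x,y,z,w,q,t,a)) = t"
  and aa: "\<And>x y z w q t a. st_a (T (x,y,z,w,q,t,a)) = A a"
  and sol: "\<And>U a x y z w q. is_solution U a x y z w q \<Longrightarrow> (\<forall>t\<in>U. ok (x t, y t, z t, w t, q t, t, a)) \<Longrightarrow>
     is_solution U (A a) (\<lambda>t. st_x (T (x t, y t, z t, w t, q t, t, a))) (\<lambda>t. st_y (T (x t, y t, z t, w t, q t, t, a)))
       (\<lambda>t. st_z (T (x t, y t, z t, w t, q t, t, a))) (\<lambda>t. st_w (T (x t, y t, z t, w t, q t, t, a)))
       (\<lambda>t. st_q (T (x t, y t, z t, w t, q t, t, a)))"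
  shows "backlund T ok"
  unfolding backlund_def Let_def using tt aa sol by simp

lemma sol_s1:
  assumes S: "is_solution U a x y z w q" and ok: "\<forall>t\<in>U. Dfun (x t, y t, z t, w t, q t, t, a) \<noteq> 0"
  shows "is_solution U (-1-a) (\<lambda>t. st_x (s1 (x t, y t, z t, w t, q t, t, a))) (\<lambda>t. st_y (s1 (x t, y t, z t, w t, q t, t, a)))
       (\<lambda>t. st_z (s1 (x t, y t, z t, w t, q t, t, a))) (\<lambda>t. st_w (s1 (x t, y t, z t, w t, q t, t, a)))
       (\<lambda>t. st_q (s1 (x t, y t, z t, w t, q t, t, a)))"
proof -
  define v where "v = (\<lambda>t. (2*a+1)/2 * inverse (Dl (y t) (z t) (w t) (q t) t))"
  have e: "\<And>t. s1 (x t, y t, z t, w t, q t, t, a) = (x t + v t, y t + q t * v t - (v t)^2,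
     z t + ((q t)^2-8*y t) * v t/2 - 3*q t * (v t)^2 + 2 * (v t)^3,
     w t + 4*(y t*q t-z t) * v t + ((q t)^2+4*y t) * (v t)^2, q t - 2 * v t, t, -1-a)"
    by (simp add: s1_eq v_def Let_def)
  have "open U" using S by (simp add: is_solution_def)
  moreover have "\<forall>t\<in>U. ((\<lambda>t. x t + v t) has_field_derivative (y t + q t * v t - (v t)^2)) (at t) \<and>
    ((\<lambda>t. y t + q t * v t - (v t)^2) has_field_derivative
          (z t + ((q t)^2-8*y t) * v t/2 - 3*q t * (v t)^2 + 2 * (v t)^3)) (at t) \<and>
    ((\<lambda>t. z t + ((q t)^2-8*y t) * v t/2 - 3*q t * (v t)^2 + 2 * (v t)^3) has_field_derivative
          (-6 * (y t + q t * v t - (v t)^2)^2 + (w t + 4*(y t*q t-z t) * v t + ((q t)^2+4*y t) * (v t)^2) + t / 4)) (at t) \<and>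
    ((\<lambda>t. w t + 4*(y t*q t-z t) * v t + ((q t)^2+4*y t) * (v t)^2) has_field_derivative
          ((w t + 4*(y t*q t-z t) * v t + ((q t)^2+4*y t) * (v t)^2) * (q t - 2 * v t) + (2 * (-1-a) - 1) / 4)) (at t) \<and>
    ((\<lambda>t. q t - 2 * v t) has_field_derivative (-(1/2) * (q t - 2 * v t)^2 - 4 * (y t + q t * v t - (v t)^2))) (at t)"
    apply (intro ballI)
    subgoal for t
  proof -
    assume tU: "t \<in> U"
    have h: "(x has_field_derivative y t) (at t)" "(y has_field_derivative z t) (at t)"
      "(z has_field_derivative (-6 * (y t)^2 + w t + t / 4)) (at t)"
      "(w has_field_derivative (w t * q t + (2 * a - 1) / 4)) (at t)"
      "(q has_field_derivative (-(1/2) * (q t)^2 - 4 * y t)) (at t)"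
      using S tU by (auto simp: is_solution_def)
    have d0: "Dl (y t) (z t) (w t) (q t) t \<noteq> 0" using ok tU by (simp add: Dfun_eq)
    have hv: "(v has_field_derivative (q t * v t - (v t)^2)) (at t)"
      unfolding v_def using v_der[OF h d0] by simp
    have dt: "v t * Dl (y t) (z t) (w t) (q t) t = (2*a+1)/2"
      using d0 by (simp add: v_def)
    show ?thesis
      using s1_der[OF h hv dt] by blast
  qed
  done
  ultimately show ?thesis unfolding e is_solution_def st_x_def st_y_def st_z_def st_w_def st_q_def
    by simp
qed


lemma sol_pi:
  assumes S: "is_solution U a x y z w q"
  shows "is_solution U (-a) (\<lambda>t. st_x (pi_tr (x t, y t, z t, w t, q t, t, a))) (\<lambda>t. st_y (pi_tr (x t, y t, z t, w t, q t, t, a)))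
       (\<lambda>t. st_z (pi_tr (x t, y t, z t, w t, q t, t, a))) (\<lambda>t. st_w (pi_tr (x t, y t, z t, w t, q t, t, a)))
       (\<lambda>t. st_q (pi_tr (x t, y t, z t, w t, q t, t, a)))"
proof -
  have e: "\<And>t. pi_tr (x t, y t, z t, w t, q t, t, a) = (x t + q t/2, -(y t + (q t)^2/4),
     -(z t - (1/4)*q t*((q t)^2 + 8*y t)), -(w t + y t*(q t)^2 - 4*(y t)^2 - 2*z t*q t + t/2), - q t, t, -a)"
    unfolding pi_tr_def by (simp only: prod.case)
  have "open U" using S by (simp add: is_solution_def)
  moreover have "\<forall>t\<in>U. ((\<lambda>t. x t + q t/2) has_field_derivative (-(y t + (q t)^2/4))) (at t)
  \<and> ((\<lambda>t. -(y t + (q t)^2/4)) has_field_derivative (-(z t - (1/4)*q t*((q t)^2 + 8*y t)))) (at t)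
  \<and> ((\<lambda>t. -(z t - (1/4)*q t*((q t)^2 + 8*y t))) has_field_derivative
        (-6 * (-(y t + (q t)^2/4))^2 + (-(w t + y t*(q t)^2 - 4*(y t)^2 - 2*z t*q t + t/2)) + t / 4)) (at t)
  \<and> ((\<lambda>t. -(w t + y t*(q t)^2 - 4*(y t)^2 - 2*z t*q t + t/2)) has_field_derivative
        ((-(w t + y t*(q t)^2 - 4*(y t)^2 - 2*z t*q t + t/2)) * (- q t) + (2 * (-a) - 1) / 4)) (at t)
  \<and> ((\<lambda>t. - q t) has_field_derivative (-(1/2) * (- q t)^2 - 4 * (-(y t + (q t)^2/4)))) (at t)"
    apply (intro ballI)
    subgoal for t
  proof -
    assume tU: "t \<in> U"
    have h: "(x has_field_derivative y t) (at t)" "(y has_field_derivative z t) (at t)"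
      "(z has_field_derivative (-6 * (y t)^2 + w t + t / 4)) (at t)"
      "(w has_field_derivative (w t * q t + (2 * a - 1) / 4)) (at t)"
      "(q has_field_derivative (-(1/2) * (q t)^2 - 4 * y t)) (at t)"
      using S tU by (auto simp: is_solution_def)
    show ?thesis using pi_der[OF h] by blast
  qed
  done
  ultimately show ?thesis unfolding e is_solution_def st_x_def st_y_def st_z_def st_w_def st_q_def
    by simp
qed

lemma sol_s0:
  assumes S: "is_solution U a x y z w q" and ok: "\<forall>t\<in>U. st_w (x t, y t, z t, w t, q t, t, a) \<noteq> 0"
  shows "is_solution U (1-a) (\<lambda>t. st_x (s0 (x t, y t, z t, w t, q t, t, a))) (\<lambda>t. st_y (s0 (x t, y t, z t, w t, q t, t, a)))
       (\<lambda>t. st_z (s0 (x t, y t, z t, w t, q t, t, a))) (\<lambda>t. st_w (s0 (x t, y t, z t, w t, q t, t, a)))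
       (\<lambda>t. st_q (s0 (x t, y t, z t, w t, q t, t, a)))"
proof -
  have e: "\<And>t. s0 (x t, y t, z t, w t, q t, t, a) = (x t, y t, z t, w t, q t + (a - 1/2) / w t, t, 1-a)"
    unfolding s0_def by (simp only: prod.case)
  have "open U" using S by (simp add: is_solution_def)
  moreover have "\<forall>t\<in>U. (x has_field_derivative y t) (at t) \<and> (y has_field_derivative z t) (at t) \<and>
      (z has_field_derivative (-6 * (y t)^2 + w t + t / 4)) (at t) \<and>
      (w has_field_derivative (w t * (q t + (a - 1/2) / w t) + (2 * (1-a) - 1) / 4)) (at t) \<and>
      ((\<lambda>t. q t + (a - 1/2) / w t) has_field_derivative (-(1/2) * (q t + (a - 1/2) / w t)^2 - 4 * y t)) (at t)"
    apply (intro ballI)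
    subgoal for t
  proof -
    assume tU: "t \<in> U"
    have h: "(x has_field_derivative y t) (at t)" "(y has_field_derivative z t) (at t)"
      "(z has_field_derivative (-6 * (y t)^2 + w t + t / 4)) (at t)"
      "(w has_field_derivative (w t * q t + (2 * a - 1) / 4)) (at t)"
      "(q has_field_derivative (-(1/2) * (q t)^2 - 4 * y t)) (at t)"
      using S tU by (auto simp: is_solution_def)
    have w0: "w t \<noteq> 0" using ok tU by (simp add: st_w_def)
    show ?thesis using s0_der(1)[where w=w and q=q and t=t and a=a and y=y, OF h(4) h(5) w0] s0_der(2)[where w=w and q=q and t=t and a=a and y=y, OF h(4) h(5) w0] h(1-3) by blast
  qed
  done
  ultimately show ?thesis unfolding e is_solution_def st_x_def st_y_def st_z_def st_w_def st_q_def
    by simp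
qed

theorem theorem9p2:
  shows "backlund s0 (\<lambda>P. st_w P \<noteq> 0)
       \<and> backlund s1 (\<lambda>P. Dfun P \<noteq> 0)
       \<and> backlund pi_tr (\<lambda>P. True)
       \<and> (\<forall>P. st_w P \<noteq> 0 \<longrightarrow> s0 (s0 P) = P)
       \<and> (\<forall>P. Dfun P \<noteq> 0 \<longrightarrow> s1 (s1 P) = P)
       \<and> (\<forall>P. pi_tr (pi_tr P) = P)
       \<and> (\<forall>P. Dfun P \<noteq> 0 \<longrightarrow> s0 (pi_tr P) = pi_tr (s1 P))"
proof (intro conjI allI impI)
  show "backlund s0 (\<lambda>P. st_w P \<noteq> 0)"
    apply (rule backlund_intro[where A="\<lambda>a. 1 - a"])
    apply (simp add: s0_def st_t_def)
    apply (simp add: s0_def st_a_def)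
    apply (erule sol_s0, assumption)
    done
  show "backlund s1 (\<lambda>P. Dfun P \<noteq> 0)"
    apply (rule backlund_intro[where A="\<lambda>a. -1 - a"])
    apply (simp add: s1_eq Let_def st_t_def)
    apply (simp add: s1_eq Let_def st_a_def)
    apply (erule sol_s1, assumption)
    done
  show "backlund pi_tr (\<lambda>P. True)"
    apply (rule backlund_intro[where A="\<lambda>a. - a"])
    apply (simp add: pi_tr_def st_t_def)
    apply (simp add: pi_tr_def st_a_def)
    apply (erule sol_pi)
    done
  show "\<And>P. st_w P \<noteq> 0 \<Longrightarrow> s0 (s0 P) = P" by (rule s0_s0)
  show "\<And>P. s1 (s1 P) = P" by (rule s1_s1)
  show "\<And>P. pi_tr (pi_tr P) = P" by (rule pi_pi)
  show "\<And>P. s0 (pi_tr P) = pi_tr (s1 P)" by (rule s0_pi)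
qed

end
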